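(* Let $\sigma$ be a completely erasing $k$-block substitution with $w_\epsilon\ne1^k$ that satisfies the optimality condition. Suppose $$\lim_{|w|\to\infty}\frac{|w|}{\epsilon(w)}=\infty,$$ meaning that for every $M>0$ there is $N$ such that $|w|/\epsilon(w)>M$ for all $w\in\{0,1\}^*$ with $|w|>N$. Then every point $x\in\mathbb I$ is a full entropy point of $f_\sigma$: for every closed neighborhood $K$ of $x$ in $\mathbb I$, $h(f_\sigma,K)=h(f_\sigma)=\infty$.
   Context: Notation: $\mathbb I=[0,1]$. $\{0,1\}^*$ and $\{0,1\}^\omega$ denote finite and infinite binary words, and $\epsilon$ is the empty word. For a word $w$, set $0.w=\sum_iw_i2^{-i}$. For $x\in(0,1]$, $\widetilde x$ is the unique infinite binary expansion of $x$ not ending in $0^\infty$. Fix $k\ge2$. An erasing $k$-block substitution is a map $\sigma:\{0,1\}^k\to\{0,1\}^*$ with exactly one block $w_\epsilon$ such that $\sigma(w_\epsilon)=\epsilon$. $\sigma$ is alternating if there are $\sigma_1,\dots,\sigma_k:\{0,1\}\to\{0,1\}^*$ with $\sigma(b_1\cdots b_k)=\sigma_1(b_1)\cdots\sigma_k(b_k)$. It is then extended to all finite or infinite words by $\sigma(u)=\prod_j\sigma_{((j-1)\bmod k)+1}(u_j)$. $\sigma$ is completely erasing if it is erasing and alternating, and every $w\in\{0,1\}^*$ satisfies $\sigma^n(w)=\epsilon$ for some $n\in\mathbb N$. The least such $n$ is the vanishing order $\epsilon(w)$. The map $f_\sigma:\mathbb I\to\mathbb I$ is defined by $f_\sigma(x)=0.\sigma(\widetilde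 x)$ if $x\in(0,1]$ and $\widetilde x\neq w_\epsilon^\infty$, and $f_\sigma(x)=0$ otherwise. Optimality condition: every $w\in\{0,1\}^\omega$ can be written as $w=\prod_{i\ge1}\sigma(b_i)$ with blocks $b_i\in\{0,1\}^k$ satisfying $\sigma(b_i)\ne\epsilon$. Topological entropy: let $d_n(x,y)=\max_{0\le i\le n}|f^i(x)-f^i(y)|$. A set $S$ is $(n,\delta)$-separated if $d_n(x,y)\ge\delta$ for all distinct $x,y\in S$. For $K\subseteq\mathbb I$, let $s_K(n,\delta)$ be the maximal cardinality of an $(n,\delta)$-separated subset of $K$. Then $h(f,K)=\lim_{\delta\to0}\limsup_{n\to\infty}\frac1n\log s_K(n,\delta)$ and $h(f)=h(f,\mathbb I)$. *)

theory Defs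
  imports "HOL-Analysis.Analysis"
begin

(* Finite binary words: bool list (True = 1).  Infinite words: nat => bool,
   positions indexed from 0.  An alternating k-block substitution is given by
   its component maps  s i :: bool => bool list  for i = 0..k-1
   (s i corresponds to sigma_{i+1} in the paper). *)

definition sub_word :: "nat \<Rightarrow> (nat \<Rightarrow> bool \<Rightarrow> bool list) \<Rightarrow> bool list \<Rightarrow> bool list" where
  "sub_word k s u = concat (map (\<lambda>j. s (j mod k) (u ! j)) [0..<length u])"

definition blocks :: "nat \<Rightarrow> bool list set" where
  "blocks k = {b. length b = k}"

definition erasing :: "nat \<Rightarrow> (nat \<Rightarrow> bool \<Rightarrow> bool list) \<Rightarrow> bool" where
  "erasing k s \<longleftrightarrow> (\<exists>!b. b \<in> blocks k \<and> sub_word k s b = [])"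

definition w_eps :: "nat \<Rightarrow> (nat \<Rightarrow> bool \<Rightarrow> bool list) \<Rightarrow> bool list" where
  "w_eps k s = (THE b. b \<in> blocks k \<and> sub_word k s b = [])"

definition completely_erasing :: "nat \<Rightarrow> (nat \<Rightarrow> bool \<Rightarrow> bool list) \<Rightarrow> bool" where
  "completely_erasing k s \<longleftrightarrow> erasing k s \<and> (\<forall>w. \<exists>n. (sub_word k s ^^ n) w = [])"

definition van_order :: "nat \<Rightarrow> (nat \<Rightarrow> bool \<Rightarrow> bool list) \<Rightarrow> bool list \<Rightarrow> nat" where
  "van_order k s w = (LEAST n. (sub_word k s ^^ n) w = [])"

definition binval :: "bool list \<Rightarrow> real" where
  "binval w = (\<Sum>i<length w. (if w ! i then 1 else 0) / 2 ^ (i + 1))"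

definition binval_inf :: "(nat \<Rightarrow> bool) \<Rightarrow> real" where
  "binval_inf w = (\<Sum>i. (if w i then 1 else 0) / 2 ^ (i + 1))"

definition prefix_word :: "(nat \<Rightarrow> bool) \<Rightarrow> nat \<Rightarrow> bool list" where
  "prefix_word w n = map w [0..<n]"

definition tilde :: "real \<Rightarrow> (nat \<Rightarrow> bool)" where
  "tilde x = (THE w. (\<forall>N. \<exists>n\<ge>N. w n) \<and> binval_inf w = x)"

(* 0.sigma(w) for an infinite word w; sigma(w) may be finite or infinite;
   its value is the limit (= supremum) of the values of sigma applied to prefixes *)
definition sub_inf_val :: "nat \<Rightarrow> (nat \<Rightarrow> bool \<Rightarrow> bool list) \<Rightarrow> (nat \<Rightarrow> bool) \<Rightarrow> real" where
  "sub_inf_val k s w = (SUP n. binval (sub_word k s (prefix_word w n)))"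

definition f_sigma :: "nat \<Rightarrow> (nat \<Rightarrow> bool \<Rightarrow> bool list) \<Rightarrow> real \<Rightarrow> real" where
  "f_sigma k s x =
     (if 0 < x \<and> x \<le> 1 \<and> tilde x \<noteq> (\<lambda>n. w_eps k s ! (n mod k))
      then sub_inf_val k s (tilde x) else 0)"

definition optimal :: "nat \<Rightarrow> (nat \<Rightarrow> bool \<Rightarrow> bool list) \<Rightarrow> bool" where
  "optimal k s \<longleftrightarrow>
     (\<forall>w :: nat \<Rightarrow> bool. \<exists>b :: nat \<Rightarrow> bool list.
        (\<forall>i. b i \<in> blocks k \<and> sub_word k s (b i) \<noteq> []) \<and>
        (\<forall>m. let u = concat (map (\<lambda>i. sub_word k s (b i)) [0..<m])
             in prefix_word w (length u) = u))"

definition dist_n :: "(real \<Rightarrow> real) \<Rightarrow> nat \<Rightarrow> real \<Rightarrow> real \<Rightarrow> real" where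
  "dist_n f n x y = Max ((\<lambda>i. \<bar>(f ^^ i) x - (f ^^ i) y\<bar>) ` {0..n})"

definition separated :: "(real \<Rightarrow> real) \<Rightarrow> nat \<Rightarrow> real \<Rightarrow> real set \<Rightarrow> bool" where
  "separated f n \<delta> S \<longleftrightarrow> (\<forall>x\<in>S. \<forall>y\<in>S. x \<noteq> y \<longrightarrow> dist_n f n x y \<ge> \<delta>)"

definition sep_card :: "(real \<Rightarrow> real) \<Rightarrow> real set \<Rightarrow> nat \<Rightarrow> real \<Rightarrow> ereal" where
  "sep_card f K n \<delta> = (SUP S\<in>{S. S \<subseteq> K \<and> finite S \<and> separated f n \<delta> S}. ereal (real (card S)))"

definition elog :: "ereal \<Rightarrow> ereal" where
  "elog t = (if t = \<infinity> then \<infinity> else ereal (ln (real_of_ereal t)))"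

definition entropy_on :: "(real \<Rightarrow> real) \<Rightarrow> real set \<Rightarrow> ereal" where
  "entropy_on f K =
     Lim (at_right (0::real))
       (\<lambda>\<delta>. limsup (\<lambda>n. elog (sep_card f K n \<delta>) / ereal (real n)))"

definition entropy :: "(real \<Rightarrow> real) \<Rightarrow> ereal" where
  "entropy f = entropy_on f {0..1}"

end

theory Submission
  imports Defs
begin


definition swp :: "nat \<Rightarrow> (nat \<Rightarrow> bool \<Rightarrow> bool list) \<Rightarrow> nat \<Rightarrow> bool list \<Rightarrow> bool list" where
  "swp k s r u = concat (map (\<lambda>j. s ((j + r) mod k) (u ! j)) [0..<length u])"

lemma swp_Nil[simp]: "swp k s r [] = []"
  by (simp add: swp_def)

lemma swp_snoc: "swp k s r (u @ [c]) = swp k s r u @ s ((length u + r) mod k) c"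
proof -
  have "map (\<lambda>j. s ((j + r) mod k) ((u @ [c]) ! j)) [0..<length u]
      = map (\<lambda>j. s ((j + r) mod k) (u ! j)) [0..<length u]"
    by (intro map_cong[OF refl]) (simp add: nth_append)
  then show ?thesis by (simp add: swp_def del: map_eq_conv)
qed

lemma swp_append: "swp k s r (a @ b) = swp k s r a @ swp k s (r + length a) b"
proof (induction b rule: rev_induct)
  case Nil
  then show ?case by simp
next
  case (snoc x xs)
  then show ?case
    by (simp add: swp_snoc append_assoc[symmetric] del: append_assoc) (simp add: algebra_simps)
qed

lemma swp_mod: "r mod k = r' mod k \<Longrightarrow> swp k s r u = swp k s r' u"
  unfolding swp_def by (metis mod_add_right_eq)

lemma sub_word_swp: "sub_word k s = swp k s 0"
  by (rule ext) (simp add: sub_word_def swp_def)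

definition conc :: "bool list \<Rightarrow> (nat \<Rightarrow> bool) \<Rightarrow> nat \<Rightarrow> bool" where
  "conc d v = (\<lambda>n. if n < length d then d ! n else v (n - length d))"

lemma conc_Nil[simp]: "conc [] v = v"
  by (simp add: conc_def)

definition isp :: "bool list \<Rightarrow> (nat \<Rightarrow> bool) \<Rightarrow> bool" where
  "isp u z \<longleftrightarrow> (\<forall>i<length u. z i = u ! i)"

lemma isp_appendD: "isp (a @ b) z \<Longrightarrow> isp a z"
  by (auto simp: isp_def nth_append)

lemma isp_conc: "isp X z \<Longrightarrow> isp (D @ X) (conc D z)"
  by (auto simp: isp_def conc_def nth_append)

lemma isp_conc_self: "isp D (conc D z)"
  by (auto simp: isp_def conc_def)

lemma isp_prefix_word: "isp u z \<Longrightarrow> prefix_word z (length u) = u"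
  by (auto simp: isp_def prefix_word_def intro!: nth_equalityI)

lemma length_prefix_word[simp]: "length (prefix_word v n) = n"
  by (simp add: prefix_word_def)

lemma nth_prefix_word[simp]: "i < n \<Longrightarrow> prefix_word v n ! i = v i"
  by (simp add: prefix_word_def)

lemma prefix_word_take: "n \<le> m \<Longrightarrow> prefix_word v n = take n (prefix_word v m)"
  by (auto intro!: nth_equalityI)

lemma prefix_word_conc:
  "prefix_word (conc d v) n = (if n \<le> length d then take n d else d @ prefix_word v (n - length d))"
  by (auto intro!: nth_equalityI simp: conc_def nth_append)

lemma prefix_word_add: "prefix_word v (n + m) = prefix_word v n @ prefix_word (\<lambda>i. v (n + i)) m"
  by (rule nth_equalityI) (auto simp: nth_append)

lemma swp_take_isp: "isp (swp k s r w) z \<Longrightarrow> isp (swp k s r (take n w)) z"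
  by (metis append_take_drop_id isp_appendD swp_append)

lemma length_swp_mono: "n \<le> m \<Longrightarrow> length (swp k s r (prefix_word v n)) \<le> length (swp k s r (prefix_word v m))"
  by (metis append_take_drop_id length_append le_add1 prefix_word_take swp_append)

definition img :: "nat \<Rightarrow> (nat \<Rightarrow> bool \<Rightarrow> bool list) \<Rightarrow> nat \<Rightarrow> (nat \<Rightarrow> bool) \<Rightarrow> (nat \<Rightarrow> bool) \<Rightarrow> bool" where
  "img k s r v z \<longleftrightarrow> (\<forall>n. isp (swp k s r (prefix_word v n)) z) \<and>
      (\<forall>L. \<exists>n. L \<le> length (swp k s r (prefix_word v n)))"

lemma img_mod: "r mod k = r' mod k \<Longrightarrow> img k s r v z = img k s r' v z"
  unfolding img_def using swp_mod by metis

lemma img_conc: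
  assumes "img k s (r + length d) v z"
  shows "img k s r (conc d v) (conc (swp k s r d) z)"
  unfolding img_def
proof (intro conjI allI)
  fix n
  show "isp (swp k s r (prefix_word (conc d v) n)) (conc (swp k s r d) z)"
  proof (cases "n \<le> length d")
    case True
    then show ?thesis by (simp add: prefix_word_conc swp_take_isp isp_conc_self)
  next
    case False
    then show ?thesis using assms by (simp add: prefix_word_conc swp_append isp_conc img_def)
  qed
next
  fix L
  obtain n where "L \<le> length (swp k s (r + length d) (prefix_word v n))"
    using assms unfolding img_def by blast
  moreover have "length (swp k s (r + length d) (prefix_word v n)) \<le> length (swp k s (r + length d) (prefix_word v (Suc n)))"
    by (rule length_swp_mono) simp
  ultimately show "\<exists>n. L \<le> length (swp k s r (prefix_word (conc d v) n))"
    by (intro exI[of _ "Suc n + length d"]) (simp add: prefix_word_conc swp_append)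
qed

definition ep :: "(nat \<Rightarrow> bool) \<Rightarrow> bool" where
  "ep z \<longleftrightarrow> (\<exists>N P. P > 0 \<and> (\<forall>n\<ge>N. z (n + P) = z n))"

lemma ep_conc: "ep (conc d v) \<Longrightarrow> ep v"
  unfolding ep_def
proof (elim exE conjE)
  fix N P assume P: "0 < P" and h: "\<forall>n\<ge>N. conc d v (n + P) = conc d v n"
  show "\<exists>N P. 0 < P \<and> (\<forall>n\<ge>N. v (n + P) = v n)"
  proof (intro exI conjI allI impI)
    fix n assume "N \<le> n"
    then have "conc d v (n + length d + P) = conc d v (n + length d)" using h by auto
    then show "v (n + P) = v n" by (simp add: conc_def)
  qed (use P in auto)
qed



lemma concat_rep_nth:
  assumes "i < j * length C"
  shows "concat (replicate (Suc j) C) ! i = concat (replicate j C) ! i"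
  using assms by (simp add: replicate_append_same[symmetric] nth_append length_concat sum_list_replicate del: replicate_append_same)

lemma concat_rep_nth2:
  shows "concat (replicate (Suc j) C) ! (length C + i) = concat (replicate j C) ! i"
  by (simp add: nth_append)

lemma ep_img:
  assumes k: "k > 0" and im: "img k s r v z" and e: "ep v"
  shows "ep z"
proof -
  from e obtain N P where P: "P > 0" and per: "\<forall>n\<ge>N. v (n + P) = v n" unfolding ep_def by blast
  have perm: "v (n + m * P) = v n" if "n \<ge> N" for n m
  proof (induction m)
    case (Suc m)
    have "v (n + m * P + P) = v (n + m * P)" using per that by auto
    then show ?case using Suc by (simp add: algebra_simps)
  qed simp
  define Q where "Q = k * P"
  define N' where "N' = k * N"
  have NN: "N' \<ge> N" using k by (simp add: N'_def)
  have perQ: "v (n + j * Q) = v n" if "n \<ge> N'" for n j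
    using perm[of n "j * k"] that NN by (simp add: Q_def mult.commute mult.left_commute)
  define A where "A = swp k s r (prefix_word v N')"
  define C where "C = swp k s (r + N') (prefix_word (\<lambda>i. v (N' + i)) Q)"
  have decomp: "swp k s r (prefix_word v (N' + j * Q)) = A @ concat (replicate j C)" for j
  proof (induction j)
    case 0
    then show ?case by (simp add: A_def)
  next
    case (Suc j)
    have "prefix_word v (N' + Suc j * Q) = prefix_word v (N' + j * Q) @ prefix_word (\<lambda>i. v (N' + j * Q + i)) Q"
    proof -
      have "N' + Suc j * Q = (N' + j * Q) + Q" by simp
      then show ?thesis by (simp only: prefix_word_add)
    qed
    moreover have "prefix_word (\<lambda>i. v (N' + j * Q + i)) Q = prefix_word (\<lambda>i. v (N' + i)) Q"
    proof (rule nth_equalityI)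
      fix i assume "i < length (prefix_word (\<lambda>i. v (N' + j * Q + i)) Q)"
      then show "prefix_word (\<lambda>i. v (N' + j * Q + i)) Q ! i = prefix_word (\<lambda>i. v (N' + i)) Q ! i"
        using perQ[of "N' + i" j] by (simp add: algebra_simps)
    qed simp
    moreover have "swp k s (r + length (prefix_word v (N' + j * Q))) = swp k s (r + N')"
    proof (rule ext, rule swp_mod)
      have "r + length (prefix_word v (N' + j * Q)) = (r + N') + (j * P) * k" by (simp add: Q_def algebra_simps)
      then show "(r + length (prefix_word v (N' + j * Q))) mod k = (r + N') mod k" by (simp only: mod_mult_self1)
    qed
    ultimately show ?case
      by (simp add: swp_append Suc C_def replicate_append_same[symmetric] del: replicate_append_same)
  qed
  have Cne: "C \<noteq> []"
  proof
    assume C0: "C = []"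
    obtain n where n: "Suc (length A) \<le> length (swp k s r (prefix_word v n))"
      using im unfolding img_def by blast
    have "1 \<le> Q" using P k by (simp add: Q_def)
    then have "n * 1 \<le> n * Q" by (rule mult_le_mono2)
    then have "n \<le> N' + n * Q" by linarith
    then have "length (swp k s r (prefix_word v n)) \<le> length (swp k s r (prefix_word v (N' + n * Q)))"
      by (rule length_swp_mono)
    also have "\<dots> = length A" using decomp[of n] C0 by simp
    finally show False using n by simp
  qed
  show ?thesis unfolding ep_def
  proof (intro exI conjI allI impI)
    show "length C > 0" using Cne by simp
    fix n assume n: "n \<ge> length A"
    define i where "i = n - length A"
    define j where "j = Suc i"
    have "1 \<le> length C" using Cne by (simp add: Suc_le_eq)
    then have "i * 1 \<le> i * length C" by (rule mult_le_mono2)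
    then have ij: "i < j * length C" using \<open>1 \<le> length C\<close> unfolding j_def mult_Suc by linarith
    have isp1: "isp (A @ concat (replicate (Suc j) C)) z"
      using im unfolding img_def by (metis decomp)
    have L: "length (concat (replicate (Suc j) C)) = Suc j * length C" by (simp add: length_concat sum_list_replicate)
    have n_eq: "n = length A + i" using n by (simp add: i_def)
    have ij2: "i < Suc j * length C" using ij by simp
    have "z n = (A @ concat (replicate (Suc j) C)) ! (length A + i)"
      using isp1 ij2 L unfolding isp_def n_eq by simp
    also have "\<dots> = concat (replicate (Suc j) C) ! i" by (rule nth_append_length_plus)
    also have "\<dots> = concat (replicate j C) ! i" using ij by (rule concat_rep_nth)
    also have "\<dots> = concat (replicate (Suc j) C) ! (length C + i)" by (rule concat_rep_nth2[symmetric])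
    also have "\<dots> = (A @ concat (replicate (Suc j) C)) ! (length A + (length C + i))"
      by (rule nth_append_length_plus[symmetric])
    also have "\<dots> = z (n + length C)"
      using isp1 ij L unfolding isp_def n_eq by (simp add: algebra_simps)
    finally show "z (n + length C) = z n" by simp
  qed
qed



context
  fixes k :: nat and s :: "nat \<Rightarrow> bool \<Rightarrow> bool list"
  assumes k2: "k \<ge> 2" and ce: "completely_erasing k s" and opt: "optimal k s"
begin

lemma kpos: "k > 0" using k2 by simp

lemma weps_props: "length (w_eps k s) = k" "sub_word k s (w_eps k s) = []"
proof -
  have "\<exists>!b. b \<in> blocks k \<and> sub_word k s b = []" using ce unfolding completely_erasing_def erasing_def by blast
  then have "w_eps k s \<in> blocks k \<and> sub_word k s (w_eps k s) = []"
    unfolding w_eps_def by (rule theI')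
  then show "length (w_eps k s) = k" "sub_word k s (w_eps k s) = []" by (auto simp: blocks_def)
qed

lemma weps_comp: "j < k \<Longrightarrow> s j (w_eps k s ! j) = []"
  using weps_props by (auto simp: sub_word_def)

lemma swp_drop_weps: "swp k s r (drop (r mod k) (w_eps k s)) = []"
proof -
  have "s ((j + r) mod k) (drop (r mod k) (w_eps k s) ! j) = []" if "j < k - r mod k" for j
  proof -
    have "(j + r) mod k = (j + r mod k) mod k" by (simp add: mod_add_right_eq)
    also have "\<dots> = j + r mod k" using that by (intro mod_less) simp
    finally have "(j + r) mod k = r mod k + j" by simp
    moreover have "r mod k + j < k" using that by simp
    ultimately show ?thesis using weps_props(1) weps_comp[of "r mod k + j"] by (simp add: add.commute)
  qed
  then show ?thesis using weps_props(1) by (simp add: swp_def)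
qed

lemma pw_isp: "prefix_word z (length u) = u \<Longrightarrow> isp u z"
  unfolding isp_def by (metis nth_prefix_word)

lemma optimal_img: "\<exists>v. img k s 0 v z"
proof -
  obtain b where b: "\<forall>i. b i \<in> blocks k \<and> sub_word k s (b i) \<noteq> []"
    and pre: "\<forall>m. let u = concat (map (\<lambda>i. sub_word k s (b i)) [0..<m]) in prefix_word z (length u) = u"
    using opt unfolding optimal_def by blast
  have bl: "length (b i) = k" for i using b by (simp add: blocks_def)
  define v where "v n = b (n div k) ! (n mod k)" for n
  have pv: "prefix_word v (k * m) = concat (map b [0..<m])" for m
  proof (induction m)
    case (Suc m)
    have "prefix_word v (k * Suc m) = prefix_word v (k * m) @ prefix_word (\<lambda>i. v (k * m + i)) k"
      using prefix_word_add[of v "k * m" k] by (simp add: algebra_simps)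
    moreover have "prefix_word (\<lambda>i. v (k * m + i)) k = b m"
      by (rule nth_equalityI) (auto simp: bl v_def)
    ultimately show ?case using Suc by simp
  qed (simp add: prefix_word_def)
  have len_cb: "length (concat (map b [0..<m])) = k * m" for m
    by (induction m) (auto simp: bl)
  have sc: "swp k s 0 (concat (map b [0..<m])) = concat (map (\<lambda>i. sub_word k s (b i)) [0..<m])" for m
  proof (induction m)
    case (Suc m)
    have "swp k s (k * m) (b m) = swp k s 0 (b m)" by (rule swp_mod) simp
    then show ?case using Suc by (simp add: swp_append len_cb sub_word_swp)
  qed simp
  have lensc: "m \<le> length (concat (map (\<lambda>i. sub_word k s (b i)) [0..<m]))" for m
  proof (induction m)
    case (Suc m)
    have "sub_word k s (b m) \<noteq> []" using b by blast
    then have "1 \<le> length (sub_word k s (b m))" by (simp add: Suc_le_eq)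
    then show ?case using Suc by simp
  qed simp
  have ispm: "isp (swp k s 0 (prefix_word v (k * m))) z" for m
    using pre[rule_format, of m] by (simp add: pv sc Let_def pw_isp)
  have "img k s 0 v z"
    unfolding img_def
  proof (intro conjI allI)
    fix n
    have "n \<le> k * n" using kpos by simp
    then have "prefix_word v n = take n (prefix_word v (k * n))" by (rule prefix_word_take)
    then show "isp (swp k s 0 (prefix_word v n)) z" using swp_take_isp[OF ispm[of n]] by simp
  next
    fix L show "\<exists>n. L \<le> length (swp k s 0 (prefix_word v n))"
      using lensc[of L] by (intro exI[of _ "k * L"]) (simp add: pv sc)
  qed
  then show ?thesis by blast
qed

definition good :: "(nat \<Rightarrow> bool) \<Rightarrow> bool" where "good z \<longleftrightarrow> \<not> ep z"

lemma psurj: "good z \<Longrightarrow> \<exists>v. good v \<and> img k s r v z"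
proof -
  assume gz: "good z"
  obtain v' where v': "img k s 0 v' z" using optimal_img by blast
  define d where "d = drop (r mod k) (w_eps k s)"
  have ld: "length d = k - r mod k" using weps_props(1) by (simp add: d_def)
  have "r mod k < k" using kpos by simp
  moreover have "k * (r div k) + r mod k = r" by (rule mult_div_mod_eq)
  ultimately have "r + length d = k * (r div k) + k" using ld by arith
  then have "r + length d = k * (r div k + 1)" by simp
  then have "(r + length d) mod k = 0 mod k" by simp
  then have "img k s (r + length d) v' z" using v' img_mod by blast
  then have "img k s r (conc d v') (conc (swp k s r d) z)" by (rule img_conc)
  then have i: "img k s r (conc d v') z" by (simp add: d_def swp_drop_weps)
  have "good (conc d v')"
    using gz ep_img[OF kpos v'] ep_conc unfolding good_def by blast
  then show ?thesis using i by blast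
qed

end


definition tm :: "(nat \<Rightarrow> bool) \<Rightarrow> nat \<Rightarrow> real" where
  "tm w i = (if w i then 1 else 0) / 2 ^ (i + 1)"

lemma tm_nonneg: "0 \<le> tm w i" by (simp add: tm_def)

lemma tm_le: "tm w i \<le> (1/2) ^ Suc i" by (simp add: tm_def power_divide)

lemma summable_half: "summable (\<lambda>i. (1/2::real) ^ Suc i)"
  using power_half_series by (rule sums_summable)

lemma summable_tm: "summable (tm w)"
  by (rule summable_comparison_test[OF _ summable_half]) (use tm_nonneg tm_le in auto)

lemma binval_inf_tm: "binval_inf w = suminf (tm w)"
  unfolding binval_inf_def tm_def by (rule refl)

lemma val_nonneg: "0 \<le> binval_inf w"
  unfolding binval_inf_tm by (rule suminf_nonneg[OF summable_tm tm_nonneg])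

lemma val_le1: "binval_inf w \<le> 1"
proof -
  have "suminf (tm w) \<le> (\<Sum>i. (1/2::real) ^ Suc i)"
    by (rule suminf_le[OF tm_le summable_tm summable_half])
  then show ?thesis using power_half_series sums_unique binval_inf_tm by metis
qed

lemma val_pos: "w n \<Longrightarrow> 0 < binval_inf w"
  unfolding binval_inf_tm
  by (rule suminf_pos2[OF summable_tm]) (auto simp: tm_nonneg tm_def)

lemma binval_prefix: "binval (prefix_word w m) = (\<Sum>i<m. tm w i)"
  by (simp add: binval_def tm_def)

lemma val_dec: "binval_inf w = binval (prefix_word w m) + binval_inf (\<lambda>n. w (n + m)) / 2 ^ m"
proof -
  have "suminf (tm w) = (\<Sum>n. tm w (n + m)) + (\<Sum>i<m. tm w i)"
    by (rule suminf_split_initial_segment[OF summable_tm])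
  moreover have "(\<lambda>n. tm w (n + m)) = (\<lambda>n. tm (\<lambda>n. w (n + m)) n / 2 ^ m)"
    by (rule ext) (simp add: tm_def power_add)
  moreover have "(\<Sum>n. tm (\<lambda>n. w (n + m)) n / 2 ^ m) = suminf (tm (\<lambda>n. w (n + m))) / 2 ^ m"
    by (rule suminf_divide[OF summable_tm])
  ultimately show ?thesis by (simp add: binval_inf_tm binval_prefix)
qed

lemma binval_snoc: "binval (u @ [c]) = binval u + (if c then 1 else 0) / 2 ^ (length u + 1)"
  by (simp add: binval_def nth_append)

lemma binval_nonneg: "0 \<le> binval u"
  by (simp add: binval_def sum_nonneg)

lemma binval_le: "binval u \<le> 1 - 1 / 2 ^ length u"
proof (induction u rule: rev_induct)
  case Nil
  then show ?case by (simp add: binval_def)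
next
  case (snoc x xs)
  have "binval (xs @ [x]) \<le> binval xs + 1 / 2 ^ (length xs + 1)"
    by (simp add: binval_snoc)
  also have "\<dots> \<le> 1 - 1 / 2 ^ length xs + 1 / 2 ^ (length xs + 1)" using snoc by simp
  also have "\<dots> = 1 - 1 / 2 ^ length (xs @ [x])" by (simp add: field_simps)
  finally show ?case .
qed

lemma prefix_word_Suc: "prefix_word w (Suc m) = prefix_word w m @ [w m]"
  by (simp add: prefix_word_def)

lemma val_zero_at: "\<not> w j \<Longrightarrow> binval_inf w \<le> 1 - 1 / 2 ^ (j + 1)"
proof -
  assume wj: "\<not> w j"
  have "binval_inf w = binval (prefix_word w (Suc j)) + binval_inf (\<lambda>n. w (n + Suc j)) / 2 ^ Suc j"
    by (rule val_dec)
  also have "\<dots> \<le> binval (prefix_word w j) + 1 / 2 ^ Suc j"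
    using wj val_le1[of "\<lambda>n. w (n + Suc j)"] by (simp add: prefix_word_Suc binval_snoc divide_right_mono)
  also have "\<dots> \<le> 1 - 1 / 2 ^ j + 1 / 2 ^ Suc j" using binval_le[of "prefix_word w j"] by simp
  also have "\<dots> = 1 - 1 / 2 ^ (j + 1)" by (simp add: field_simps)
  finally show ?thesis .
qed

lemma prefix_word_eqI: "(\<And>n. n < m \<Longrightarrow> w n = y n) \<Longrightarrow> prefix_word w m = prefix_word y m"
  by (simp add: prefix_word_def)

lemma val_strict:
  assumes agree: "\<And>n. n < i \<Longrightarrow> y n = w n" and yi: "\<not> y i" and wi: "w i"
    and inf: "\<forall>N. \<exists>n\<ge>N. w n"
  shows "binval_inf y < binval_inf w"
proof -
  have pe: "prefix_word y i = prefix_word w i" using agree by (rule prefix_word_eqI)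
  obtain n where n: "n \<ge> Suc i" "w n" using inf by blast
  have pos: "0 < binval_inf (\<lambda>m. w (m + Suc i))"
    by (rule val_pos[of _ "n - Suc i"]) (use n in simp)
  have "binval_inf y = binval (prefix_word y (Suc i)) + binval_inf (\<lambda>n. y (n + Suc i)) / 2 ^ Suc i"
    by (rule val_dec)
  also have "\<dots> \<le> binval (prefix_word w i) + 1 / 2 ^ Suc i"
    using yi pe val_le1[of "\<lambda>n. y (n + Suc i)"] by (simp add: prefix_word_Suc binval_snoc divide_right_mono)
  also have "\<dots> < binval (prefix_word w i) + 1 / 2 ^ Suc i + binval_inf (\<lambda>m. w (m + Suc i)) / 2 ^ Suc i"
    using pos by simp
  also have "\<dots> = binval_inf w"
    using val_dec[of w "Suc i"] wi by (simp add: prefix_word_Suc binval_snoc)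
  finally show ?thesis .
qed

lemma first_diff:
  assumes "(y :: nat \<Rightarrow> bool) \<noteq> w"
  shows "\<exists>i. (\<forall>n<i. y n = w n) \<and> y i \<noteq> w i"
proof -
  have ex: "\<exists>i. y i \<noteq> w i" using assms by auto
  define i where "i = (LEAST i. y i \<noteq> w i)"
  have "y i \<noteq> w i" unfolding i_def by (rule LeastI_ex[OF ex])
  moreover have "\<forall>n<i. y n = w n" unfolding i_def using not_less_Least by blast
  ultimately show ?thesis by blast
qed

lemma val_inj:
  assumes "\<forall>N. \<exists>n\<ge>N. y n" "\<forall>N. \<exists>n\<ge>N. w n" "binval_inf y = binval_inf w"
  shows "y = w"
proof (rule ccontr)
  assume "y \<noteq> w"
  then obtain i where a: "\<forall>n<i. y n = w n" and d: "y i \<noteq> w i" using first_diff by blast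
  show False
  proof (cases "y i")
    case True
    then have "binval_inf w < binval_inf y" using a d assms(1) by (intro val_strict) auto
    then show False using assms(3) by simp
  next
    case False
    then have "binval_inf y < binval_inf w" using a d assms(2) by (intro val_strict) auto
    then show False using assms(3) by simp
  qed
qed

lemma tilde_val:
  assumes "\<forall>N. \<exists>n\<ge>N. y n"
  shows "tilde (binval_inf y) = y"
  unfolding tilde_def
  by (rule the_equality) (use assms val_inj in auto)

lemma sep_core:
  assumes agree: "\<And>n. n < i \<Longrightarrow> y n = w n" and yi: "\<not> y i" and wi: "w i"
    and iq: "i < q" and yq: "\<not> y q"
  shows "binval_inf w - binval_inf y \<ge> 1 / 2 ^ (q + 1)"
proof -
  have pe: "prefix_word y i = prefix_word w i" using agree by (rule prefix_word_eqI)
  have b1: "binval_inf (\<lambda>n. y (n + Suc i)) \<le> 1 - 1 / 2 ^ (q - Suc i + 1)"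
    using val_zero_at[of "\<lambda>n. y (n + Suc i)" "q - Suc i"] yq iq by simp
  define a :: real where "a = 2 ^ Suc i"
  define b :: real where "b = 2 ^ (q - Suc i + 1)"
  define V where "V = binval_inf (\<lambda>n. y (n + Suc i))"
  define W where "W = binval_inf (\<lambda>n. w (n + Suc i))"
  have apos: "a > 0" and bpos: "b > 0" by (simp_all add: a_def b_def)
  have ey: "binval_inf y = binval (prefix_word w i) + V / a"
    using val_dec[of y "Suc i"] yi pe by (simp add: prefix_word_Suc binval_snoc V_def a_def)
  have ew: "binval_inf w = binval (prefix_word w i) + 1 / a + W / a"
    using val_dec[of w "Suc i"] wi by (simp add: prefix_word_Suc binval_snoc W_def a_def)
  have W0: "0 \<le> W / a" using val_nonneg apos by (simp add: W_def)
  have Vb: "V / a \<le> (1 - 1 / b) / a" using b1 apos by (simp add: V_def b_def divide_right_mono)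
  have ab: "a * b = 2 ^ (q + 1)"
  proof -
    have "(2::real) ^ Suc i * 2 ^ (q - Suc i + 1) = 2 ^ (Suc i + (q - Suc i + 1))" by (rule power_add[symmetric])
    also have "Suc i + (q - Suc i + 1) = q + 1" using iq by simp
    finally show ?thesis by (simp add: a_def b_def)
  qed
  have "1 / a - (1 - 1 / b) / a = 1 / (a * b)" using apos bpos by (simp add: field_simps)
  then have "1 / a - (1 - 1 / b) / a = 1 / 2 ^ (q + 1)" using ab by simp
  then show ?thesis using ey ew W0 Vb by linarith
qed



lemma good_inf: "\<not> ep z \<Longrightarrow> \<forall>N. \<exists>n\<ge>N. z n"
proof (rule ccontr)
  assume ne: "\<not> ep z" and "\<not> (\<forall>N. \<exists>n\<ge>N. z n)"
  then obtain N where "\<forall>n\<ge>N. \<not> z n" by blast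
  then have "ep z" unfolding ep_def by (intro exI[of _ N] exI[of _ 1]) auto
  then show False using ne by simp
qed

lemma good_conc: "\<not> ep v \<Longrightarrow> \<not> ep (conc d v)"
  using ep_conc by blast

context
  fixes k :: nat and s :: "nat \<Rightarrow> bool \<Rightarrow> bool list"
  assumes k2: "k \<ge> 2" and ce: "completely_erasing k s" and opt: "optimal k s"
begin

lemma good_not_weps: "good z \<Longrightarrow> z \<noteq> (\<lambda>n. w_eps k s ! (n mod k))"
proof
  assume g: "good z" and e: "z = (\<lambda>n. w_eps k s ! (n mod k))"
  have "ep z" unfolding ep_def e using k2 by (intro exI[of _ 0] exI[of _ k]) auto
  then show False using g unfolding good_def[OF k2 ce opt] by simp
qed

lemma orbit:
  assumes im: "img k s 0 y y'" and gy: "good y" and gy': "good y'"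
  shows "f_sigma k s (binval_inf y) = binval_inf y'"
proof -
  have iy: "\<forall>N. \<exists>n\<ge>N. y n" using gy good_inf unfolding good_def[OF k2 ce opt] by blast
  then obtain n0 where "y n0" by blast
  then have pos: "0 < binval_inf y" by (rule val_pos)
  have t: "tilde (binval_inf y) = y" using iy by (rule tilde_val)
  have ne: "y \<noteq> (\<lambda>n. w_eps k s ! (n mod k))" using gy by (rule good_not_weps)
  have f: "f_sigma k s (binval_inf y) = (SUP n. binval (sub_word k s (prefix_word y n)))"
    using pos val_le1[of y] t ne by (simp add: f_sigma_def sub_inf_val_def)
  define l where "l n = length (swp k s 0 (prefix_word y n))" for n
  have eq: "binval (sub_word k s (prefix_word y n)) = (\<Sum>i<l n. tm y' i)" for n
  proof -
    have "isp (swp k s 0 (prefix_word y n)) y'" using im unfolding img_def by blast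
    then have "swp k s 0 (prefix_word y n) = prefix_word y' (l n)" unfolding l_def
      by (simp add: isp_prefix_word)
    then show ?thesis by (simp add: sub_word_swp binval_prefix)
  qed
  have le: "(\<Sum>i<m. tm y' i) \<le> suminf (tm y')" for m
    by (rule sum_le_suminf[OF summable_tm]) (auto simp: tm_nonneg)
  have bdd: "bdd_above (range (\<lambda>n. \<Sum>i<l n. tm y' i))"
    by (rule bdd_aboveI[of _ "suminf (tm y')"]) (use le in auto)
  have "(SUP n. \<Sum>i<l n. tm y' i) = suminf (tm y')"
  proof (rule antisym)
    show "(SUP n. \<Sum>i<l n. tm y' i) \<le> suminf (tm y')"
      by (rule cSUP_least) (use le in auto)
  next
    show "suminf (tm y') \<le> (SUP n. \<Sum>i<l n. tm y' i)"
    proof (rule suminf_le_const[OF summable_tm])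
      fix m
      obtain n where n: "m \<le> l n" using im unfolding img_def l_def by blast
      have "(\<Sum>i<m. tm y' i) \<le> (\<Sum>i<l n. tm y' i)"
        by (rule sum_mono2) (use n tm_nonneg in auto)
      also have "\<dots> \<le> (SUP n. \<Sum>i<l n. tm y' i)" by (rule cSUP_upper[OF _ bdd]) simp
      finally show "sum (tm y') {..<m} \<le> (SUP n. \<Sum>i<l n. tm y' i)" .
    qed
  qed
  then show ?thesis using f eq by (simp add: binval_inf_tm)
qed

lemma chain:
  "good z \<Longrightarrow> \<exists>v. good v \<and>
     (f_sigma k s ^^ m) (binval_inf (conc u v)) = binval_inf (conc ((sub_word k s ^^ m) u) z)"
proof (induction m arbitrary: u)
  case 0
  then show ?case by auto
next
  case (Suc m)
  obtain v1 where g1: "good v1"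
    and h1: "(f_sigma k s ^^ m) (binval_inf (conc (sub_word k s u) v1))
             = binval_inf (conc ((sub_word k s ^^ m) (sub_word k s u)) z)"
    using Suc by blast
  obtain v where gv: "good v" and iv: "img k s (length u) v v1"
    using psurj[OF k2 ce opt g1] by blast
  have "img k s (0 + length u) v v1" using iv by simp
  then have "img k s 0 (conc u v) (conc (swp k s 0 u) v1)" by (rule img_conc)
  then have im: "img k s 0 (conc u v) (conc (sub_word k s u) v1)" by (simp add: sub_word_swp)
  have g2: "good (conc u v)" "good (conc (sub_word k s u) v1)"
    using gv g1 good_conc unfolding good_def[OF k2 ce opt] by auto
  have "f_sigma k s (binval_inf (conc u v)) = binval_inf (conc (sub_word k s u) v1)"
    by (rule orbit[OF im g2])
  then have "(f_sigma k s ^^ Suc m) (binval_inf (conc u v)) = binval_inf (conc ((sub_word k s ^^ Suc m) u) z)"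
    using h1 by (simp add: funpow_Suc_right del: funpow.simps)
  then show ?case using gv by blast
qed

lemma van_order_zero: "(sub_word k s ^^ van_order k s u) u = []"
proof -
  have "\<exists>n. (sub_word k s ^^ n) u = []" using ce unfolding completely_erasing_def by blast
  then show ?thesis unfolding van_order_def by (rule LeastI_ex)
qed

lemma stage:
  "good z \<Longrightarrow> \<exists>v. good v \<and>
     (f_sigma k s ^^ van_order k s u) (binval_inf (conc u v)) = binval_inf z"
  using chain[of z "van_order k s u" u] van_order_zero by simp

definition Tc :: "bool list list \<Rightarrow> nat" where
  "Tc cs = sum_list (map (\<lambda>b. van_order k s (b @ [False, True])) cs)"

lemma codes:
  "good z \<Longrightarrow> \<exists>y. good y \<and> (f_sigma k s ^^ Tc cs) (binval_inf y) = binval_inf z \<and>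
     (\<forall>i<length cs. \<exists>w. good w \<and> (f_sigma k s ^^ Tc (take i cs)) (binval_inf y) = binval_inf w
        \<and> isp (cs ! i @ [False, True]) w)"
proof (induction cs)
  case Nil
  then show ?case by (auto simp: Tc_def)
next
  case (Cons b cs)
  obtain y1 where g1: "good y1" and h1: "(f_sigma k s ^^ Tc cs) (binval_inf y1) = binval_inf z"
    and p1: "\<forall>i<length cs. \<exists>w. good w \<and> (f_sigma k s ^^ Tc (take i cs)) (binval_inf y1) = binval_inf w
        \<and> isp (cs ! i @ [False, True]) w"
    using Cons by blast
  define u where "u = b @ [False, True]"
  obtain v where gv: "good v" and hv: "(f_sigma k s ^^ van_order k s u) (binval_inf (conc u v)) = binval_inf y1"
    using stage[OF g1] by blast
  define y where "y = conc u v"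
  have gy: "good y" using gv good_conc unfolding good_def[OF k2 ce opt] y_def by blast
  have Tcons: "Tc (b # cs') = Tc cs' + van_order k s u" for cs'
    by (simp add: Tc_def u_def)
  have it: "(f_sigma k s ^^ (Tc cs' + van_order k s u)) (binval_inf y) = (f_sigma k s ^^ Tc cs') (binval_inf y1)" for cs'
    using hv by (simp add: funpow_add y_def)
  have A: "(f_sigma k s ^^ Tc (b # cs)) (binval_inf y) = binval_inf z"
    using it[of cs] h1 Tcons by simp
  have B: "\<exists>w. good w \<and> (f_sigma k s ^^ Tc (take i (b # cs))) (binval_inf y) = binval_inf w
        \<and> isp ((b # cs) ! i @ [False, True]) w" if i: "i < length (b # cs)" for i
  proof (cases i)
    case 0
    then show ?thesis using gy by (intro exI[of _ y]) (simp add: Tc_def y_def isp_conc_self u_def[symmetric])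
  next
    case (Suc i')
    then obtain w where "good w" "(f_sigma k s ^^ Tc (take i' cs)) (binval_inf y1) = binval_inf w"
      "isp (cs ! i' @ [False, True]) w" using p1 i by auto
    then show ?thesis using it[of "take i' cs"] Tcons[of "take i' cs"] Suc by auto
  qed
  show ?case using gy A B by blast
qed

end


fun bits :: "nat \<Rightarrow> nat \<Rightarrow> bool list" where
  "bits 0 a = []"
| "bits (Suc m) a = bits m (a div 2) @ [odd a]"

lemma length_bits[simp]: "length (bits m a) = m"
  by (induction m arbitrary: a) auto

lemma binval_bits: "a < 2 ^ m \<Longrightarrow> binval (bits m a) = real a / 2 ^ m"
proof (induction m arbitrary: a)
  case 0
  then show ?case by (simp add: binval_def)
next
  case (Suc m)
  have "a div 2 < 2 ^ m" using Suc.prems by simp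
  then have IH: "binval (bits m (a div 2)) = real (a div 2) / 2 ^ m" using Suc.IH by blast
  have ra: "real a = 2 * real (a div 2) + (if odd a then 1 else 0)"
  proof -
    have "a = 2 * (a div 2) + a mod 2" by simp
    then have "real a = 2 * real (a div 2) + real (a mod 2)" by (metis of_nat_add of_nat_mult of_nat_numeral)
    moreover have "real (a mod 2) = (if odd a then 1 else 0)" by (simp add: odd_iff_mod_2_eq_one)
    ultimately show ?thesis by simp
  qed
  show ?case using IH ra by (simp add: binval_snoc field_simps)
qed

lemma cylinder:
  fixes x :: real
  assumes x: "x \<in> {0..1}" and U: "open U" "x \<in> U" "U \<inter> {0..1} \<subseteq> K"
  shows "\<exists>p. \<forall>y. isp p y \<longrightarrow> binval_inf y \<in> K"
proof -
  obtain e where e: "e > 0" "ball x e \<subseteq> U" using U open_contains_ball by blast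
  obtain m where m: "(1/2::real) ^ m < e" using real_arch_pow_inv[OF e(1), of "1/2"] by auto
  have m': "1 / 2 ^ m < e" using m by (simp add: power_divide)
  define a where "a = (if x < 1 then nat \<lfloor>x * 2 ^ m\<rfloor> else 2 ^ m - 1)"
  have a: "a < 2 ^ m \<and> real a / 2 ^ m \<le> x \<and> x \<le> (real a + 1) / 2 ^ m"
  proof (cases "x < 1")
    case True
    have f0: "0 \<le> \<lfloor>x * 2 ^ m\<rfloor>" using x by simp
    have f1: "x * 2 ^ m < 2 ^ m" using True by simp
    have ra: "real a = \<lfloor>x * 2 ^ m\<rfloor>" using f0 True by (simp add: a_def)
    have "real a \<le> x * 2 ^ m" using ra by linarith
    moreover have "x * 2 ^ m < real a + 1" using ra by linarith
    moreover have "real a < 2 ^ m" using ra f1 by linarith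
    ultimately show ?thesis
      by (simp add: field_simps)
  next
    case False
    then have x1: "x = 1" using x by simp
    have "(1::nat) \<le> 2 ^ m" by simp
    then have "real (2 ^ m - 1 :: nat) = 2 ^ m - 1" by (simp add: of_nat_diff)
    then show ?thesis using x1 False by (simp add: a_def field_simps)
  qed
  define p where "p = bits m a"
  have bp: "binval p = real a / 2 ^ m" using a by (simp add: p_def binval_bits)
  show ?thesis
  proof (intro exI allI impI)
    fix y assume "isp p y"
    then have pw: "prefix_word y m = p" using isp_prefix_word[of p y] by (simp add: p_def)
    have dec: "binval_inf y = real a / 2 ^ m + binval_inf (\<lambda>n. y (n + m)) / 2 ^ m"
      using val_dec[of y m] pw bp by simp
    have v0: "0 \<le> binval_inf (\<lambda>n. y (n + m))" "binval_inf (\<lambda>n. y (n + m)) \<le> 1"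
      by (rule val_nonneg, rule val_le1)
    have lo: "real a / 2 ^ m \<le> binval_inf y" using dec v0 by simp
    have hi: "binval_inf y \<le> (real a + 1) / 2 ^ m"
      using dec v0 by (simp add: add_divide_distrib divide_right_mono)
    have "\<bar>binval_inf y - x\<bar> \<le> 1 / 2 ^ m"
      using lo hi a by (simp add: abs_le_iff add_divide_distrib)
    then have "binval_inf y \<in> ball x e" using m' by (simp add: dist_real_def abs_minus_commute)
    moreover have "binval_inf y \<in> {0..1}" using val_nonneg val_le1 by simp
    ultimately show "binval_inf y \<in> K" using e U by blast
  qed
qed

definition z0 :: "nat \<Rightarrow> bool" where "z0 n \<longleftrightarrow> (\<exists>a. n = 2 ^ a)"

lemma z0_not_ep: "\<not> ep z0"
proof
  assume "ep z0"
  then obtain N P where P: "P > 0" and h: "\<forall>n\<ge>N. z0 (n + P) = z0 n" unfolding ep_def by blast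
  define a where "a = N + P"
  have "a < 2 ^ a" by (rule less_exp)
  then have big: "N \<le> 2 ^ a" "P < 2 ^ a" unfolding a_def by linarith+
  have "z0 (2 ^ a)" by (auto simp: z0_def)
  then have "z0 (2 ^ a + P)" using h big by auto
  then obtain c where c: "2 ^ a + P = (2::nat) ^ c" by (auto simp: z0_def)
  have "(2::nat) ^ a < 2 ^ c" using c P by linarith
  then have ac: "a < c" by simp
  have "(2::nat) ^ c < 2 ^ Suc a" using c big by simp
  then have "c < Suc a" using power_less_imp_less_exp[of "2::nat" c "Suc a"] by simp
  then show False using ac by simp
qed

lemma list_first_diff:
  assumes "length xs = length ys" "xs \<noteq> ys"
  shows "\<exists>i<length xs. take i xs = take i ys \<and> xs ! i \<noteq> ys ! i"
proof -
  have ex: "\<exists>i. i < length xs \<and> xs ! i \<noteq> ys ! i" using assms list_eq_iff_nth_eq by blast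
  define i where "i = (LEAST i. i < length xs \<and> xs ! i \<noteq> ys ! i)"
  have i: "i < length xs \<and> xs ! i \<noteq> ys ! i" unfolding i_def by (rule LeastI_ex[OF ex])
  have lt: "\<forall>n<i. xs ! n = ys ! n"
    using not_less_Least[where P="\<lambda>i. i < length xs \<and> xs ! i \<noteq> ys ! i"] i unfolding i_def[symmetric]
    by (metis i_def less_trans)
  have "take i xs = take i ys" by (rule nth_take_lemma) (use i assms lt in auto)
  then show ?thesis using i by blast
qed

lemma sep_words:
  assumes lb: "length b = q" "length b' = q" and ne: "b \<noteq> b'"
    and w: "isp (b @ [False, True]) w" and w': "isp (b' @ [False, True]) w'"
  shows "\<bar>binval_inf w - binval_inf w'\<bar> \<ge> 1 / 2 ^ (q + 1)"
proof -
  obtain i where i: "i < q" "take i b = take i b'" "b ! i \<noteq> b' ! i"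
    using list_first_diff[of b b'] lb ne by auto
  have wn: "w n = b ! n" if "n < q" for n using w that lb unfolding isp_def by (auto simp: nth_append)
  have wn': "w' n = b' ! n" if "n < q" for n using w' that lb unfolding isp_def by (auto simp: nth_append)
  have agree: "w n = w' n" if "n < i" for n
  proof -
    have "b ! n = take i b ! n" using that by simp
    also have "\<dots> = take i b' ! n" using i by simp
    also have "\<dots> = b' ! n" using that by simp
    finally show ?thesis using wn wn' that i by simp
  qed
  have wq: "\<not> w q" "\<not> w' q" using w w' lb unfolding isp_def by (auto simp: nth_append)
  show ?thesis
  proof (cases "w i")
    case True
    then have "\<not> w' i" using i wn wn' by auto
    then have "binval_inf w - binval_inf w' \<ge> 1 / 2 ^ (q + 1)"
      using sep_core[of i w' w q] agree True i wq by auto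
    then show ?thesis by simp
  next
    case False
    then have "w' i" using i wn wn' by auto
    then have "binval_inf w' - binval_inf w \<ge> 1 / 2 ^ (q + 1)"
      using sep_core[of i w w' q] agree False i wq by auto
    then show ?thesis by simp
  qed
qed



context
  fixes k :: nat and s :: "nat \<Rightarrow> bool \<Rightarrow> bool list"
  assumes k2: "k \<ge> 2" and ce: "completely_erasing k s" and opt: "optimal k s"
begin

lemma Tc_bound: "(\<forall>b\<in>set cs. van_order k s (b @ [False, True]) \<le> Tb) \<Longrightarrow> Tc k s cs \<le> length cs * Tb"
  by (induction cs) (auto simp: Tc_def[OF k2 ce opt])

lemma point_exists:
  assumes hp: "\<forall>y. isp p y \<longrightarrow> binval_inf y \<in> K"
  shows "\<exists>x. x \<in> K \<and> (\<forall>i<length cs. \<exists>w. (f_sigma k s ^^ (Tc k s (take i cs) + van_order k s p)) x = binval_inf w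
            \<and> isp (cs ! i @ [False, True]) w)"
proof -
  have gz: "good z0" using z0_not_ep by (simp add: good_def[OF k2 ce opt])
  obtain y where gy: "good y"
    and py: "\<forall>i<length cs. \<exists>w. good w \<and> (f_sigma k s ^^ Tc k s (take i cs)) (binval_inf y) = binval_inf w
        \<and> isp (cs ! i @ [False, True]) w"
    using codes[OF k2 ce opt gz, of cs] by blast
  obtain v where hv: "(f_sigma k s ^^ van_order k s p) (binval_inf (conc p v)) = binval_inf y"
    using stage[OF k2 ce opt gy, of p] by blast
  have xK: "binval_inf (conc p v) \<in> K" using hp isp_conc_self by blast
  have "\<forall>i<length cs. \<exists>w. (f_sigma k s ^^ (Tc k s (take i cs) + van_order k s p)) (binval_inf (conc p v)) = binval_inf w
            \<and> isp (cs ! i @ [False, True]) w"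
  proof (intro allI impI)
    fix i assume "i < length cs"
    then obtain w where "(f_sigma k s ^^ Tc k s (take i cs)) (binval_inf y) = binval_inf w"
      "isp (cs ! i @ [False, True]) w" using py by blast
    then show "\<exists>w. (f_sigma k s ^^ (Tc k s (take i cs) + van_order k s p)) (binval_inf (conc p v)) = binval_inf w
            \<and> isp (cs ! i @ [False, True]) w" using hv by (auto simp: funpow_add)
  qed
  then show ?thesis using xK by blast
qed

lemma sep_set:
  assumes hp: "\<forall>y. isp p y \<longrightarrow> binval_inf y \<in> K"
    and Tb: "\<forall>b. length b = q \<longrightarrow> van_order k s (b @ [False, True]) \<le> Tb"
    and n: "van_order k s p + j * Tb \<le> n"
    and d: "0 < \<delta>" "\<delta> \<le> 1 / 2 ^ (q + 1)"
  shows "ereal (real ((2 ^ q) ^ j)) \<le> sep_card (f_sigma k s) K n \<delta>"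
proof -
  define F where "F = f_sigma k s"
  define P where "P cs x \<longleftrightarrow> x \<in> K \<and> (\<forall>i<length cs. \<exists>w. (F ^^ (Tc k s (take i cs) + van_order k s p)) x = binval_inf w
            \<and> isp (cs ! i @ [False, True]) w)" for cs x
  define X where "X cs = (SOME x. P cs x)" for cs
  have PX: "P cs (X cs)" for cs
    unfolding X_def by (rule someI_ex) (use point_exists[OF hp, of cs] in \<open>simp add: P_def F_def\<close>)
  define C :: "bool list list set" where "C = {cs. set cs \<subseteq> {b. length b = q} \<and> length cs = j}"
  have key: "\<exists>t\<le>n. \<bar>(F ^^ t) (X cs) - (F ^^ t) (X cs')\<bar> \<ge> 1 / 2 ^ (q + 1)"
    if cs: "cs \<in> C" "cs' \<in> C" "cs \<noteq> cs'" for cs cs' :: "bool list list"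
  proof -
    have lj: "length cs = j" "length cs' = j" using cs by (auto simp: C_def)
    obtain i where i: "i < j" "take i cs = take i cs'" "cs ! i \<noteq> cs' ! i"
      using list_first_diff[of cs cs'] lj cs by auto
    define t where "t = Tc k s (take i cs) + van_order k s p"
    have lq: "length (cs ! i) = q" "length (cs' ! i) = q"
      using cs i lj by (auto simp: C_def) (metis (mono_tags, lifting) mem_Collect_eq nth_mem subsetD)+
    obtain w where w: "(F ^^ t) (X cs) = binval_inf w" "isp (cs ! i @ [False, True]) w"
      using PX[of cs] i lj unfolding P_def t_def by auto
    obtain w' where w': "(F ^^ t) (X cs') = binval_inf w'" "isp (cs' ! i @ [False, True]) w'"
      using PX[of cs'] i lj unfolding P_def t_def using i(2) by auto
    have "\<forall>b\<in>set (take i cs). van_order k s (b @ [False, True]) \<le> Tb"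
      using cs Tb by (auto simp: C_def dest: in_set_takeD)
    then have "Tc k s (take i cs) \<le> length (take i cs) * Tb" by (rule Tc_bound)
    also have "\<dots> \<le> j * Tb" using i lj by simp
    finally have "t \<le> n" using n by (simp add: t_def)
    moreover have "\<bar>(F ^^ t) (X cs) - (F ^^ t) (X cs')\<bar> \<ge> 1 / 2 ^ (q + 1)"
      using sep_words[OF lq i(3) w(2) w'(2)] w w' by simp
    ultimately show ?thesis by blast
  qed
  have inj: "inj_on X C"
  proof (rule inj_onI)
    fix cs cs' assume "cs \<in> C" "cs' \<in> C" "X cs = X cs'"
    show "cs = cs'"
    proof (rule ccontr)
      assume "cs \<noteq> cs'"
      then obtain t where "\<bar>(F ^^ t) (X cs) - (F ^^ t) (X cs')\<bar> \<ge> 1 / 2 ^ (q + 1)"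
        using key \<open>cs \<in> C\<close> \<open>cs' \<in> C\<close> by blast
      moreover have "(0::real) < 1 / 2 ^ (q + 1)" by simp
      moreover have "\<bar>(F ^^ t) (X cs) - (F ^^ t) (X cs')\<bar> = 0" using \<open>X cs = X cs'\<close> by simp
      ultimately show False by linarith
    qed
  qed
  have finB: "finite {b :: bool list. length b = q}"
    using finite_lists_length_eq[of "UNIV :: bool set" q] by simp
  have cardB: "card {b :: bool list. length b = q} = 2 ^ q"
    using card_lists_length_eq[of "UNIV :: bool set" q] by simp
  have finC: "finite C" unfolding C_def by (rule finite_lists_length_eq[OF finB])
  have cardC: "card C = (2 ^ q) ^ j" unfolding C_def using card_lists_length_eq[OF finB] cardB by simp
  define S where "S = X ` C"
  have SK: "S \<subseteq> K" using PX by (auto simp: S_def P_def)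
  have finS: "finite S" using finC by (simp add: S_def)
  have cardS: "card S = (2 ^ q) ^ j" using card_image[OF inj] cardC by (simp add: S_def)
  have sepS: "separated F n \<delta> S"
    unfolding separated_def
  proof (intro ballI impI)
    fix x y assume "x \<in> S" "y \<in> S" "x \<noteq> y"
    then obtain cs cs' where cs: "cs \<in> C" "cs' \<in> C" "x = X cs" "y = X cs'" by (auto simp: S_def)
    then have "cs \<noteq> cs'" using \<open>x \<noteq> y\<close> by auto
    then obtain t where t: "t \<le> n" "\<bar>(F ^^ t) x - (F ^^ t) y\<bar> \<ge> 1 / 2 ^ (q + 1)"
      using key cs by blast
    have "\<bar>(F ^^ t) x - (F ^^ t) y\<bar> \<le> dist_n F n x y"
      unfolding dist_n_def by (rule Max_ge) (use t in auto)
    then show "dist_n F n x y \<ge> \<delta>" using t d by linarith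
  qed
  have "S \<in> {S. S \<subseteq> K \<and> finite S \<and> separated F n \<delta> S}" using SK finS sepS by simp
  then have "ereal (real (card S)) \<le> sep_card F K n \<delta>"
    unfolding sep_card_def by (rule SUP_upper)
  then show ?thesis using cardS by (simp add: F_def)
qed

end


lemma elog_div_ge:
  assumes t: "ereal c \<le> t" and c: "1 \<le> c" and n: "0 < n"
  shows "ereal (ln c / real n) \<le> elog t / ereal (real n)"
proof (cases t)
  case (real r)
  then have rc: "c \<le> r" using t by simp
  have "ln c \<le> ln r" using rc c by simp
  then have "ln c / real n \<le> ln r / real n" using n by (simp add: divide_right_mono)
  then show ?thesis using real n by (simp add: elog_def)
next
  case PInf
  then show ?thesis using n by (simp add: elog_def divide_ereal_def)
next
  case MInf
  then show ?thesis using t by simp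
qed

context
  fixes k :: nat and s :: "nat \<Rightarrow> bool \<Rightarrow> bool list"
  assumes k2: "k \<ge> 2" and ce: "completely_erasing k s" and opt: "optimal k s"
begin

lemma limsup_big:
  assumes hyp: "\<forall>M>0. \<exists>N. \<forall>w. length w > N \<longrightarrow> real (length w) / real (van_order k s w) > M"
    and hp: "\<forall>y. isp p y \<longrightarrow> binval_inf y \<in> K"
    and A: "A > 0"
  shows "\<exists>\<delta>0>0. \<forall>\<delta>. 0 < \<delta> \<and> \<delta> \<le> \<delta>0 \<longrightarrow>
           ereal A \<le> limsup (\<lambda>n. elog (sep_card (f_sigma k s) K n \<delta>) / ereal (real n))"
proof -
  define L where "L = ln (2::real)"
  have L: "L > 0" by (simp add: L_def)
  define M where "M = 8 * A / L"
  have M: "M > 0" using A L by (simp add: M_def)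
  obtain N where hN: "\<forall>w. length w > N \<longrightarrow> real (length w) / real (van_order k s w) > M"
    using hyp M by blast
  define q where "q = N + 1 + nat \<lceil>M\<rceil>"
  have q1: "1 \<le> q" by (simp add: q_def)
  have qM: "M \<le> real q" unfolding q_def using le_of_int_ceiling[of M] M by linarith
  define Tb where "Tb = nat \<lceil>(real q + 2) / M\<rceil>"
  have Tb: "\<forall>b. length b = q \<longrightarrow> van_order k s (b @ [False, True]) \<le> Tb"
  proof (intro allI impI)
    fix b :: "bool list" assume lb: "length b = q"
    define e where "e = van_order k s (b @ [False, True])"
    have "length (b @ [False, True]) > N" using lb by (simp add: q_def)
    then have "M < real (length (b @ [False, True])) / real e" using hN unfolding e_def by blast
    then have r: "real (q + 2) / real e > M" using lb by simp
    then have e0: "e > 0" using M by (cases "e = 0") auto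
    then have "real (q + 2) > M * real e" using r by (simp add: field_simps)
    then have "real e < (real q + 2) / M" using M by (simp add: field_simps)
    then have "real e \<le> of_int \<lceil>(real q + 2) / M\<rceil>" using le_of_int_ceiling[of "(real q + 2) / M"] by linarith
    then show "e \<le> Tb" unfolding Tb_def by linarith
  qed
  have Tb1: "1 \<le> Tb"
  proof -
    have "0 < (real q + 2) / M" using M by simp
    then have "0 < \<lceil>(real q + 2) / M\<rceil>" by simp
    then show ?thesis unfolding Tb_def by linarith
  qed
  have TbM: "real Tb * M \<le> 4 * real q"
  proof -
    have "of_int \<lceil>(real q + 2) / M\<rceil> \<le> (real q + 2) / M + 1" by simp
    then have "real Tb \<le> (real q + 2) / M + 1" unfolding Tb_def using Tb1 Tb_def by linarith
    then have "real Tb * M \<le> ((real q + 2) / M + 1) * M" using M by (simp add: mult_right_mono)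
    also have "\<dots> = real q + 2 + M" using M by (simp add: field_simps)
    also have "\<dots> \<le> 4 * real q" using qM q1 by simp
    finally show ?thesis .
  qed
  define ep where "ep = van_order k s p"
  show ?thesis
  proof (intro exI[of _ "1 / 2 ^ (q + 1)"] conjI allI impI)
    show "(0::real) < 1 / 2 ^ (q + 1)" by simp
    fix \<delta> :: real assume d: "0 < \<delta> \<and> \<delta> \<le> 1 / 2 ^ (q + 1)"
    have ev: "eventually (\<lambda>n. ereal A \<le> elog (sep_card (f_sigma k s) K n \<delta>) / ereal (real n)) sequentially"
      unfolding eventually_sequentially
    proof (intro exI[of _ "2 * (ep + Tb)"] allI impI)
      fix n assume n: "2 * (ep + Tb) \<le> n"
      define j where "j = (n - ep) div Tb"
      have jT: "j * Tb \<le> n - ep" unfolding j_def by simp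
      have epn: "ep \<le> n" using n by arith
      have jn: "ep + j * Tb \<le> n" using jT le_diff_conv2[OF epn] by simp
      have modlt: "(n - ep) mod Tb < Tb" using Tb1 by simp
      have "n - ep = j * Tb + (n - ep) mod Tb" unfolding j_def by simp
      then have "n - ep < j * Tb + Tb" using modlt by linarith
      then have "real (n - ep) < real (j * Tb + Tb)" by (simp only: of_nat_less_iff)
      then have "real n - real ep < real j * real Tb + real Tb" using epn by (simp add: of_nat_diff)
      moreover have "real (2 * (ep + Tb)) \<le> real n" using n by (simp only: of_nat_le_iff)
      ultimately have jTr: "real n / 2 \<le> real j * real Tb" by simp
      have sc: "ereal (real ((2 ^ q) ^ j)) \<le> sep_card (f_sigma k s) K n \<delta>"
        by (rule sep_set[OF k2 ce opt hp Tb]) (use jn d in \<open>auto simp: ep_def\<close>)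
      define c where "c = real ((2 ^ q) ^ j)"
      have c1: "1 \<le> c" by (simp add: c_def)
      have lnc: "ln c = real q * real j * L"
      proof -
        have "c = 2 ^ (q * j)" by (simp add: c_def power_mult)
        then show ?thesis by (simp add: ln_realpow L_def)
      qed
      have npos: "0 < n" using n Tb1 by arith
      have "A * real n \<le> real q * real j * L"
      proof -
        have "A * real n = M * L * real n / 8" using L by (simp add: M_def)
        also have "\<dots> \<le> M * L * (2 * (real j * real Tb)) / 8"
          using jTr M L by (simp add: mult_left_mono divide_right_mono algebra_simps)
        also have "\<dots> = L * real j * (real Tb * M) / 4" by (simp add: algebra_simps)
        also have "\<dots> \<le> L * real j * (4 * real q) / 4"
          using TbM L by (simp add: mult_left_mono divide_right_mono)
        also have "\<dots> = real q * real j * L" by simp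
        finally show ?thesis .
      qed
      then have "A \<le> ln c / real n" using npos lnc by (simp add: field_simps)
      then have "ereal A \<le> ereal (ln c / real n)" by simp
      also have "\<dots> \<le> elog (sep_card (f_sigma k s) K n \<delta>) / ereal (real n)"
        by (rule elog_div_ge) (use sc c1 npos in \<open>auto simp: c_def\<close>)
      finally show "ereal A \<le> elog (sep_card (f_sigma k s) K n \<delta>) / ereal (real n)" .
    qed
    have "ereal A \<le> liminf (\<lambda>n. elog (sep_card (f_sigma k s) K n \<delta>) / ereal (real n))"
      by (rule Liminf_bounded[OF ev])
    also have "\<dots> \<le> limsup (\<lambda>n. elog (sep_card (f_sigma k s) K n \<delta>) / ereal (real n))"
      by (rule Liminf_le_Limsup) simp
    finally show "ereal A \<le> limsup (\<lambda>n. elog (sep_card (f_sigma k s) K n \<delta>) / ereal (real n))" .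
  qed
qed

lemma entropy_inf:
  assumes hyp: "\<forall>M>0. \<exists>N. \<forall>w. length w > N \<longrightarrow> real (length w) / real (van_order k s w) > M"
    and hp: "\<forall>y. isp p y \<longrightarrow> binval_inf y \<in> K"
  shows "entropy_on (f_sigma k s) K = \<infinity>"
proof -
  define g where "g \<delta> = limsup (\<lambda>n. elog (sep_card (f_sigma k s) K n \<delta>) / ereal (real n))" for \<delta>
  have "(g \<longlongrightarrow> \<infinity>) (at_right (0::real))"
    unfolding tendsto_PInfty
  proof
    fix r :: real
    define A where "A = max r 0 + 1"
    have A: "A > 0" "r < A" by (auto simp: A_def)
    obtain \<delta>0 where d0: "\<delta>0 > 0" and h: "\<forall>\<delta>. 0 < \<delta> \<and> \<delta> \<le> \<delta>0 \<longrightarrow> ereal A \<le> g \<delta>"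
      using limsup_big[OF hyp hp A(1)] unfolding g_def by blast
    show "eventually (\<lambda>\<delta>. ereal r < g \<delta>) (at_right 0)"
      unfolding eventually_at_right_field
    proof (intro exI[of _ \<delta>0] conjI allI impI)
      show "0 < \<delta>0" by (rule d0)
      fix \<delta> :: real assume "0 < \<delta>" "\<delta> < \<delta>0"
      then have "ereal A \<le> g \<delta>" using h by auto
      moreover have "ereal r < ereal A" using A by simp
      ultimately show "ereal r < g \<delta>" by (meson less_le_trans)
    qed
  qed
  then have "Lim (at_right (0::real)) g = \<infinity>" by (rule tendsto_Lim[rotated]) simp
  then show ?thesis unfolding entropy_on_def g_def[abs_def] .
qed

end

theorem mainTheorem19:
  fixes k :: nat and s :: "nat \<Rightarrow> bool \<Rightarrow> bool list"
  assumes "k \<ge> 2"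
    and "completely_erasing k s"
    and "w_eps k s \<noteq> replicate k True"
    and "optimal k s"
    and "\<forall>M>0. \<exists>N. \<forall>w. length w > N \<longrightarrow>
            real (length w) / real (van_order k s w) > M"
  shows "\<forall>x\<in>{0..1::real}. \<forall>K. (K \<subseteq> {0..1} \<and> closed K \<and>
            (\<exists>U. open U \<and> x \<in> U \<and> U \<inter> {0..1} \<subseteq> K)) \<longrightarrow>
           entropy_on (f_sigma k s) K = entropy (f_sigma k s) \<and>
           entropy (f_sigma k s) = \<infinity>"
proof (intro ballI allI impI)
  fix x :: real and K :: "real set"
  assume x: "x \<in> {0..1}"
    and hK: "K \<subseteq> {0..1} \<and> closed K \<and> (\<exists>U. open U \<and> x \<in> U \<and> U \<inter> {0..1} \<subseteq> K)"
  then obtain U where U: "open U" "x \<in> U" "U \<inter> {0..1} \<subseteq> K" by blast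
  obtain p where p: "\<forall>y. isp p y \<longrightarrow> binval_inf y \<in> K" using cylinder[OF x U] by blast
  obtain p' where p': "\<forall>y. isp p' y \<longrightarrow> binval_inf y \<in> {0..1}"
    using cylinder[OF x, of UNIV "{0..1}"] by auto
  have e1: "entropy_on (f_sigma k s) K = \<infinity>"
    by (rule entropy_inf[OF assms(1,2,4,5) p])
  have e2: "entropy (f_sigma k s) = \<infinity>"
    unfolding entropy_def by (rule entropy_inf[OF assms(1,2,4,5) p'])
  show "entropy_on (f_sigma k s) K = entropy (f_sigma k s) \<and> entropy (f_sigma k s) = \<infinity>"
    using e1 e2 by simp
qed

end
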